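(* As formal power series in $z$, $$\sum_{n\ge0}\frac{r_n(s,q^2)}{(q;q)_n}z^n=\frac{e_q(sz)\,e_q(z)}{e_{q^2}(qsz^2)}.$$ Equivalently, for every integer $n\ge0$: (i) $r_n(s,q^2)=\sum_{j=0}^{\lfloor n/2\rfloor}(-1)^jq^{j^2}(q;q^2)_j\begin{bmatrix} n\\ 2j\end{bmatrix}_q s^j\,r_{n-2j}(s,q)$; (ii) $r_n(s,q^2)=\sum_{j=0}^{\lfloor n/2\rfloor}\begin{bmatrix} n\\ 2j\end{bmatrix}_q(q;q^2)_j(qs;q^2)_j\,s^{n-2j}\Big(-\frac1s;q\Big)_{n-2j}$; (iii) $\sum_{k=0}^{2n}(-1)^k(-s;q)_k\begin{bmatrix} 2n\\ k\end{bmatrix}_q r_{2n-k}(s,q^2)=(q;q^2)_n(qs;q^2)_n$ and $\sum_{k=0}^{2n+1}(-1)^k(-s;q)_k\begin{bmatrix} 2n+1\\ k\end{bmatrix}_q r_{2n+1-k}(s,q^2)=0$.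
   Context: $q$ is an indeterminate. $(x;q)_n=\prod_{j=0}^{n-1}(1-q^jx)$. The Gaussian binomial coefficient is $\begin{bmatrix} n\\ j\end{bmatrix}_q=\frac{(q;q)_n}{(q;q)_j(q;q)_{n-j}}$ for $0\le j\le n$ and $0$ otherwise. The Rogers–Szegö polynomials are $r_n(s,q)=\sum_{j=0}^n\begin{bmatrix} n\\ j\end{bmatrix}_q s^j$. $e_q(w)=\sum_{n\ge0}\frac{w^n}{(q;q)_n}$ as a formal power series, and $1/e_q(w)$ denotes its formal reciprocal. *)

theory Defs
  imports "HOL-Computational_Algebra.Formal_Power_Series"
begin

definition qpoch :: "'a::field \<Rightarrow> 'a \<Rightarrow> nat \<Rightarrow> 'a" where
  "qpoch x q n = (\<Prod>j<n. (1 - q ^ j * x))"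

definition qbinom :: "'a::field \<Rightarrow> nat \<Rightarrow> nat \<Rightarrow> 'a" where
  "qbinom q n j = (if j \<le> n then qpoch q q n / (qpoch q q j * qpoch q q (n - j)) else 0)"

definition rogers_szego :: "nat \<Rightarrow> 'a::field \<Rightarrow> 'a \<Rightarrow> 'a" where
  "rogers_szego n s q = (\<Sum>j=0..n. qbinom q n j * s ^ j)"

definition qexp :: "'a::field \<Rightarrow> 'a fps" where
  "qexp q = Abs_fps (\<lambda>n. 1 / qpoch q q n)"

end

theory Submission imports Defs begin
unbundle fps_syntax

definition sc :: "'a::comm_ring_1 \<Rightarrow> 'a fps \<Rightarrow> 'a fps" where
  "sc c f = Abs_fps (\<lambda>n. c^n * f $ n)"

lemma sc_nth[simp]: "sc c f $ n = c^n * f $ n" by (simp add: sc_def)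

lemma sc_mult: "sc c (f*g) = sc c f * sc c g"
proof (rule fps_ext)
  fix n
  have "sc c (f*g) $ n = (\<Sum>i=0..n. (c^i * f $ i) * (c^(n-i) * g $ (n-i)))"
    by (simp add: fps_mult_nth sum_distrib_left)
       (rule sum.cong, simp, simp add: algebra_simps power_add[symmetric])
  then show "sc c (f*g) $ n = (sc c f * sc c g) $ n" by (simp add: fps_mult_nth)
qed

lemma sc_diff: "sc c (f - g) = sc c f - sc c g" by (rule fps_ext) (simp add: algebra_simps)
lemma sc_one[simp]: "sc c 1 = 1" by (rule fps_ext) simp
lemma sc_sc: "sc a (sc b f) = sc (a*b) f" by (rule fps_ext) (simp add: power_mult_distrib)
lemma sc_X: "sc c (fps_const a * fps_X) = fps_const (c*a) * fps_X"
  by (rule fps_ext) (simp, auto simp: le_Suc_eq)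
lemma sc_X2: "sc c (fps_const a * fps_X^2) = fps_const (c^2*a) * fps_X^2"
  by (rule fps_ext) simp
lemma sc_const[simp]: "sc c (fps_const a) = fps_const a" by (rule fps_ext) simp
lemma sc_add: "sc c (f + g) = sc c f + sc c g" by (rule fps_ext) (simp add: algebra_simps)

lemma uniq:
  fixes K Q P :: "'a::field fps"
  assumes eq: "Q * sc q K = P * K" and Q0: "Q $ 0 = 1" and P0: "P $ 0 = 1" and K0: "K $ 0 = 0"
    and gen: "\<And>n. n > 0 \<Longrightarrow> q ^ n \<noteq> 1"
  shows "K = 0"
proof -
  have "K $ n = 0" for n
  proof (induction n rule: less_induct)
    case (less n)
    show ?case
    proof (cases n)
      case 0 then show ?thesis using K0 by simp
    next
      case (Suc m)
      have z1: "(\<Sum>i=Suc 0..n. Q $ i * (q^(n-i) * K $ (n-i))) = 0"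
        by (rule sum.neutral) (use less in auto)
      have z2: "(\<Sum>i=Suc 0..n. P $ i * K $ (n-i)) = 0"
        by (rule sum.neutral) (use less in auto)
      have "(Q * sc q K) $ n = q^n * K $ n"
        using z1 Q0 by (simp add: fps_mult_nth sum.atLeast_Suc_atMost)
      moreover have "(P * K) $ n = K $ n"
        using z2 P0 by (simp add: fps_mult_nth sum.atLeast_Suc_atMost)
      ultimately have "q^n * K $ n = K $ n" using eq by simp
      hence "(q^n - 1) * K $ n = 0" by (simp add: algebra_simps)
      moreover have "q^n - 1 \<noteq> 0" using gen[of n] Suc by simp
      ultimately show ?thesis by simp
    qed
  qed
  then show ?thesis by (simp add: fps_ext)
qed

lemma uniq2:
  fixes G H Q P :: "'a::field fps"
  assumes "Q * sc q G = P * G" "Q * sc q H = P * H" "Q $ 0 = 1" "P $ 0 = 1" "G $ 0 = H $ 0"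
    and gen: "\<And>n. n > 0 \<Longrightarrow> q ^ n \<noteq> 1"
  shows "G = H"
proof -
  have "Q * sc q (G - H) = P * (G - H)"
    using assms(1,2) by (simp add: sc_diff algebra_simps)
  then have "G - H = 0" by (rule uniq) (use assms in auto)
  then show ?thesis by simp
qed

lemma even_sum:
  fixes g :: "nat \<Rightarrow> 'a::comm_monoid_add"
  assumes "\<And>i. odd i \<Longrightarrow> g i = 0"
  shows "(\<Sum>i=0..n. g i) = (\<Sum>j=0..n div 2. g (2*j))"
proof -
  have "(\<Sum>i=0..n. g i) = (\<Sum>i\<in>{i\<in>{0..n}. even i}. g i)"
    by (rule sum.mono_neutral_right) (use assms in auto)
  also have "{i\<in>{0..n}. even i} = (\<lambda>j. 2*j) ` {0..n div 2}"
    by (auto elim!: evenE)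
  also have "(\<Sum>i\<in>(\<lambda>j. 2*j) ` {0..n div 2}. g i) = (\<Sum>j=0..n div 2. g (2*j))"
    by (rule sum.reindex_cong[of "\<lambda>j. 2*j"]) (auto simp: inj_on_def)
  finally show ?thesis .
qed

lemma qpoch_Suc: "qpoch x q (Suc n) = qpoch x q n * (1 - q^n * x)"
  by (simp add: qpoch_def)
lemma qpoch_0[simp]: "qpoch x q 0 = 1" by (simp add: qpoch_def)

lemma qpoch_nz: assumes gen: "\<And>n. n > 0 \<Longrightarrow> q ^ n \<noteq> (1::'a::field)"
  shows "qpoch q q n \<noteq> 0"
proof -
  have "1 - q^j * q \<noteq> 0" for j using gen[of "Suc j"] by (auto simp: algebra_simps)
  then show ?thesis by (simp add: qpoch_def)
qed


lemma qexp_nth[simp]: "qexp p $ n = 1 / qpoch p p n" by (simp add: qexp_def)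

lemma cX_nth: "(fps_const (c::'a::comm_ring_1) * fps_X * K) $ n = (if n = 0 then 0 else c * K $ (n-1))"
proof -
  have "(fps_const c * fps_X * K) $ n = c * (fps_X * K) $ n"
    by (simp only: mult.assoc fps_mult_left_const_nth)
  then show ?thesis by (simp only: fps_X_mult_nth) simp
qed
lemma cXk_nth: "(fps_const (c::'a::comm_ring_1) * fps_X^k * K) $ n = (if n < k then 0 else c * K $ (n-k))"
proof -
  have "(fps_const c * fps_X^k * K) $ n = c * (fps_X^k * K) $ n"
    by (simp only: mult.assoc fps_mult_left_const_nth)
  then show ?thesis by (simp only: fps_X_power_mult_nth) simp
qed
lemma Xk_nth: "(fps_X^k * K) $ n = (if n < k then 0 else K $ (n-k))"
  by (simp add: fps_X_power_mult_nth)

lemma E_eq: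
  assumes gen: "\<And>n. n > 0 \<Longrightarrow> p ^ n \<noteq> (1::'a::field)"
  shows "sc p (qexp p) = (1 - fps_X) * qexp p"
proof (rule fps_ext)
  fix n
  show "sc p (qexp p) $ n = ((1 - fps_X) * qexp p) $ n"
  proof (cases n)
    case 0 then show ?thesis by simp
  next
    case (Suc m)
    have nz: "qpoch p p m \<noteq> 0" "1 - p^m * p \<noteq> 0"
      using qpoch_nz[OF gen] gen[of "Suc m"] by (auto simp: algebra_simps)
    have "((1 - fps_X) * qexp p) $ Suc m = 1/qpoch p p (Suc m) - 1/qpoch p p m"
      by (simp add: ring_distribs)
    also have "\<dots> = p^(Suc m) / qpoch p p (Suc m)"
      using nz by (simp add: qpoch_Suc divide_simps)
    finally show ?thesis by (simp add: Suc)
  qed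
qed

lemma compose_lin: "(f :: 'a::comm_ring_1 fps) oo (fps_const c * fps_X) = sc c f"
proof (rule fps_ext)
  fix n
  have pw: "(fps_const c * fps_X)^i = fps_const (c^i) * fps_X^i" for i
    by (simp add: power_mult_distrib fps_const_power)
  show "(f oo (fps_const c * fps_X)) $ n = sc c f $ n"
  proof -
    have "(f oo (fps_const c * fps_X)) $ n = (\<Sum>i=0..n. if i = n then f $ i * c^i else 0)"
      unfolding fps_compose_nth pw by (rule sum.cong) auto
    then show ?thesis by (simp add: mult.commute)
  qed
qed

lemma compose_sq: "((f :: 'a::comm_ring_1 fps) oo (fps_const c * fps_X^2)) $ n
   = (if even n then c^(n div 2) * f $ (n div 2) else 0)"
proof -
  have pw: "(fps_const c * fps_X^2)^i = fps_const (c^i) * fps_X^(2*i)" for i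
    by (simp add: power_mult_distrib fps_const_power power_mult)
  have "(f oo (fps_const c * fps_X^2)) $ n = (\<Sum>i=0..n. if i = n div 2 \<and> even n then f $ i * c^i else 0)"
    unfolding fps_compose_nth pw by (rule sum.cong) (auto simp: fps_X_power_nth)
  also have "\<dots> = (if even n then c^(n div 2) * f $ (n div 2) else 0)"
    by (auto simp: sum.delta mult.commute)
  finally show ?thesis .
qed

lemma B_coeff:
  assumes gen: "\<And>n. n > 0 \<Longrightarrow> p ^ n \<noteq> (1::'a::field)"
  shows "sc s (qexp p) * qexp p = Abs_fps (\<lambda>n. rogers_szego n s p / qpoch p p n)"
proof (rule fps_ext)
  fix n
  have nz: "qpoch p p k \<noteq> 0" for k using qpoch_nz[OF gen] .
  have "rogers_szego n s p / qpoch p p n = (\<Sum>j=0..n. qbinom p n j * s^j / qpoch p p n)"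
    by (simp add: rogers_szego_def sum_divide_distrib)
  also have "\<dots> = (\<Sum>j=0..n. s^j * (1 / qpoch p p j) * (1 / qpoch p p (n-j)))"
    by (rule sum.cong) (use nz in \<open>auto simp: qbinom_def field_simps\<close>)
  finally show "(sc s (qexp p) * qexp p) $ n = Abs_fps (\<lambda>n. rogers_szego n s p / qpoch p p n) $ n"
    by (simp add: fps_mult_nth)
qed


lemma L_nth: "((1 - fps_const (a::'a::comm_ring_1) * fps_X) * K) $ n = K $ n - (if n = 0 then 0 else a * K $ (n-1))"
  by (simp only: left_diff_distrib mult_1_left fps_sub_nth cX_nth)
lemma Pl_nth: "((1 + fps_X) * (K::'a::comm_ring_1 fps)) $ n = K $ n + (if n = 0 then 0 else K $ (n-1))"
  by (simp only: distrib_right mult_1_left fps_add_nth fps_X_mult_nth)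
lemma S_nth: "((1 - fps_const (a::'a::comm_ring_1) * fps_X^2) * K) $ n = K $ n - (if n < 2 then 0 else a * K $ (n-2))"
  by (simp only: left_diff_distrib mult_1_left fps_sub_nth cXk_nth)

lemma sc_L: "sc c (1 - fps_const a * fps_X) = 1 - fps_const (c*a) * fps_X"
  by (simp add: sc_diff sc_X)
lemma sc_S: "sc c (1 - fps_const a * fps_X^2) = 1 - fps_const (c^2*a) * fps_X^2"
  by (simp add: sc_diff sc_X2)

lemma E_eq': assumes gen: "\<And>n. n > 0 \<Longrightarrow> p ^ n \<noteq> (1::'a::field)"
  shows "sc p (qexp p) = (1 - fps_const 1 * fps_X) * qexp p"
  using E_eq[OF gen] by simp

lemma A_eq: assumes gen: "\<And>n. n > 0 \<Longrightarrow> p ^ n \<noteq> (1::'a::field)"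
  shows "sc p (sc s (qexp p) * qexp p)
     = (1 - fps_const 1 * fps_X) * ((1 - fps_const s * fps_X) * (sc s (qexp p) * qexp p))"
proof -
  have "sc p (sc s (qexp p)) = sc s (sc p (qexp p))" by (simp add: sc_sc mult.commute)
  also have "\<dots> = (1 - fps_const s * fps_X) * sc s (qexp p)"
    by (simp only: E_eq'[OF gen] sc_mult sc_L) simp
  finally show ?thesis using E_eq'[OF gen] by (simp add: sc_mult mult_ac)
qed

lemma RS_aux:
  fixes Q a b P R0 R1 R2 s :: "'a::field"
  assumes "Q \<noteq> 0" "a \<noteq> 0" "b \<noteq> 0" "b = 1 - P"
    "P * (R2/(Q*a*b)) = R2/(Q*a*b) - s*(R1/(Q*a)) - (R1/(Q*a) - s*(R0/Q))"
  shows "R2 = (1+s)*R1 - s*a*R0"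
proof -
  let ?m = "Q*a*b"
  have "?m * (P * (R2/(Q*a*b))) = ?m * (R2/(Q*a*b) - s*(R1/(Q*a)) - (R1/(Q*a) - s*(R0/Q)))"
    using assms(5) by simp
  moreover have "?m * (P * (R2/(Q*a*b))) = P*R2" using assms(1-3) by (simp add: field_simps)
  moreover have "?m * (R2/(Q*a*b) - s*(R1/(Q*a)) - (R1/(Q*a) - s*(R0/Q))) = R2 - s*b*R1 - (b*R1 - s*a*b*R0)"
    using assms(1-3) by (simp add: right_diff_distrib)
  ultimately have "P*R2 = R2 - s*b*R1 - (b*R1 - s*a*b*R0)" by simp
  then have "b * R2 = b * ((1+s)*R1 - s*a*R0)" unfolding assms(4) by algebra
  then show ?thesis using assms(3) by simp
qed

lemma RS_rec: assumes gen: "\<And>n. n > 0 \<Longrightarrow> p ^ n \<noteq> (1::'a::field)"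
  shows "rogers_szego (Suc (Suc n)) s p
     = (1 + s) * rogers_szego (Suc n) s p - s * (1 - p^(Suc n)) * rogers_szego n s p"
proof -
  let ?B = "sc s (qexp p) * qexp p"
  have Bn: "?B $ k = rogers_szego k s p / qpoch p p k" for k
    by (simp add: B_coeff[OF gen])
  have "sc p ?B $ Suc (Suc n) = ((1 - fps_const 1 * fps_X) * ((1 - fps_const s * fps_X) * ?B)) $ Suc (Suc n)"
    using A_eq[OF gen, of s] by simp
  then have "p^(Suc (Suc n)) * ?B $ Suc (Suc n) = ?B $ Suc (Suc n) - s * ?B $ (Suc n) - (?B $ Suc n - s * ?B $ n)"
    by (simp only: L_nth sc_nth) simp
  then have e: "p^(Suc (Suc n)) * (rogers_szego (Suc (Suc n)) s p / qpoch p p (Suc (Suc n)))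
     = rogers_szego (Suc (Suc n)) s p / qpoch p p (Suc (Suc n)) - s * (rogers_szego (Suc n) s p / qpoch p p (Suc n))
       - (rogers_szego (Suc n) s p / qpoch p p (Suc n) - s * (rogers_szego n s p / qpoch p p n))"
    by (simp only: Bn)
  have nz: "qpoch p p n \<noteq> 0" "1 - p^n * p \<noteq> 0" "1 - p^Suc n * p \<noteq> 0"
    using qpoch_nz[OF gen] gen[of "Suc n"] gen[of "Suc (Suc n)"] by (auto simp: algebra_simps)
  have "rogers_szego (Suc (Suc n)) s p = (1+s)*rogers_szego (Suc n) s p - s*(1 - p^n*p)*rogers_szego n s p"
    by (rule RS_aux[OF nz, of "p^Suc (Suc n)"]) (use e in \<open>simp_all add: qpoch_Suc mult.assoc\<close>)
  then show ?thesis by (simp add: mult.commute)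
qed


definition ev :: "(nat \<Rightarrow> 'a::zero) \<Rightarrow> 'a fps" where
  "ev f = Abs_fps (\<lambda>n. if even n then f (n div 2) else 0)"
lemma ev_even[simp]: "ev f $ (2*k) = f k" by (simp add: ev_def)
lemma ev_odd[simp]: "ev f $ (Suc (2*k)) = 0" by (simp add: ev_def)
lemma ev_even2[simp]: "ev f $ Suc (Suc (2*k)) = f (Suc k)" by (simp add: ev_def)
lemma ev_1[simp]: "ev f $ Suc 0 = 0" by (simp add: ev_def)
lemma ev_0[simp]: "ev f $ 0 = f 0" by (simp add: ev_def)

lemma ev_eq:
  fixes f g :: "nat \<Rightarrow> 'a::comm_ring_1"
  assumes "f 0 = g 0" "\<And>k. q^(2*k+2) * f (Suc k) - c * (q^(2*k) * f k) = g (Suc k) - d * g k"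
  shows "(1 - fps_const c * fps_X^2) * sc q (ev f) = (1 - fps_const d * fps_X^2) * ev g"
proof (rule fps_ext)
  fix n
  obtain k where "n = 2*k \<or> n = Suc (2*k)" by (metis oddE odd_even_add add.commute plus_1_eq_Suc evenE)
  then show "((1 - fps_const c * fps_X^2) * sc q (ev f)) $ n = ((1 - fps_const d * fps_X^2) * ev g) $ n"
  proof
    assume n: "n = 2*k"
    show ?thesis
    proof (cases k)
      case 0 then show ?thesis using n assms(1) by (simp add: S_nth)
    next
      case (Suc j)
      have "n - 2 = 2*j" "\<not> n < 2" using n Suc by auto
      then show ?thesis using assms(2)[of j] n Suc by (simp add: S_nth)
    qed
  next
    assume n: "n = Suc (2*k)"
    show ?thesis
    proof (cases k)
      case 0 then show ?thesis using n by (simp add: S_nth)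
    next
      case (Suc j)
      have "n - 2 = Suc (2*j)" "\<not> n < 2" using n Suc by auto
      then show ?thesis using n by (simp add: S_nth)
    qed
  qed
qed

lemma lin_eq:
  fixes f g :: "nat \<Rightarrow> 'a::comm_ring_1"
  assumes "f 0 = g 0" "\<And>n. q^(Suc n) * f (Suc n) - a * (q^n * f n) = g (Suc n) - b * g n"
  shows "(1 - fps_const a * fps_X) * sc q (Abs_fps f) = (1 - fps_const b * fps_X) * Abs_fps g"
proof (rule fps_ext)
  fix n
  show "((1 - fps_const a * fps_X) * sc q (Abs_fps f)) $ n = ((1 - fps_const b * fps_X) * Abs_fps g) $ n"
    using assms by (cases n) (simp_all add: L_nth)
qed

lemma Pl_L: "(1 + fps_X :: 'a::comm_ring_1 fps) = 1 - fps_const (-1) * fps_X"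
proof -
  have "fps_const (-1::'a) = - 1" by (rule fps_ext) simp
  then show ?thesis by simp
qed

lemma F_aux: fixes Q y q s R0 R1 :: "'a::field"
  assumes "Q \<noteq> 0" "1 - y*q \<noteq> 0" "1 - q*y*q \<noteq> 0"
  shows "q*(q*y) * ((1+s)*R1 - s*(1 - (y*q)^2)*R0) / (Q*(1-y*q)*(1-q*y*q)) - q*s*(y*R0)/Q
    = ((1+s)*R1 - s*(1-(y*q)^2)*R0)/(Q*(1-y*q)*(1-q*y*q)) - s*R1/(Q*(1-y*q)) - (R1/(Q*(1-y*q)) - s*R0/Q)"
  using assms by (simp add: divide_simps) (simp add: algebra_simps power2_eq_square)

context
  fixes q s :: "'a::field"
  assumes gen: "\<And>n. n > 0 \<Longrightarrow> q ^ n \<noteq> 1"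
begin

lemma gen2: "n > 0 \<Longrightarrow> (q^2) ^ n \<noteq> 1"
  using gen[of "2*n"] by (simp add: power_mult)

lemma nzq: "qpoch q q n \<noteq> 0" by (rule qpoch_nz[OF gen])
lemma nzq2: "qpoch (q^2) (q^2) n \<noteq> 0" by (rule qpoch_nz[OF gen2])
lemma nz1: "1 - q^n * q \<noteq> 0" using gen[of "Suc n"] by (auto simp: algebra_simps)
lemma nz2: "1 - (q^2)^n * q^2 \<noteq> 0" using gen2[of "Suc n"] by (auto simp: algebra_simps)

definition "Dq = qexp (q^2) oo (fps_const (q*s) * fps_X^2)"
definition "Cq = ev (\<lambda>k. (-1)^k * q^(k^2) * s^k / qpoch (q^2) (q^2) k)"
definition "Mq = ev (\<lambda>k. qpoch (q*s) (q^2) k / qpoch (q^2) (q^2) k)"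
definition "Nq = Abs_fps (\<lambda>m. (\<Prod>i<m. (s + q^i)) / qpoch q q m)"
definition "Tq = Abs_fps (\<lambda>m. (-1)^m * qpoch (-s) q m / qpoch q q m)"
definition "Fq = Abs_fps (\<lambda>n. rogers_szego n s (q^2) / qpoch q q n)"
definition "Aq = sc s (qexp q) * qexp q"

lemma Dq_ev: "Dq = ev (\<lambda>k. (q*s)^k / qpoch (q^2) (q^2) k)"
  by (rule fps_ext) (simp add: Dq_def compose_sq ev_def)

lemma D_eq: "sc q Dq = (1 - fps_const (q*s) * fps_X^2) * Dq"
proof -
  have "(1 - fps_const 0 * fps_X^2) * sc q Dq = (1 - fps_const (q*s) * fps_X^2) * Dq"
    unfolding Dq_ev
  proof (rule ev_eq)
    fix k
    have "q^(2*k+2) = (q^2)^k * q^2" by (simp add: power_mult power_add power2_eq_square)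
    then show "q^(2*k+2) * ((q*s)^Suc k / qpoch (q^2) (q^2) (Suc k)) - 0 * (q^(2*k) * ((q*s)^k / qpoch (q^2) (q^2) k))
      = (q*s)^Suc k / qpoch (q^2) (q^2) (Suc k) - q*s * ((q*s)^k / qpoch (q^2) (q^2) k)"
      using nzq2[of k] nz2[of k] by (simp add: qpoch_Suc field_simps)
  qed simp
  then show ?thesis by simp
qed


lemma pw2: "q^(2*k+2) = q^(2*k) * q * q" by (simp add: power_add mult.assoc)
lemma pwsq: "(q^2)^k = q^(2*k)" by (simp add: power_mult)
lemma nz2': "1 - q^(2*k) * q * q \<noteq> 0" using nz2[of k] by (simp add: power_mult power2_eq_square mult.assoc)
lemma nzq2': "qpoch (q^2) (q^2) (Suc k) = qpoch (q^2) (q^2) k * (1 - q^(2*k) * q * q)"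
  by (simp add: qpoch_Suc power_mult power2_eq_square mult.assoc)

lemma C_eq: "(1 - fps_const (q*s) * fps_X^2) * sc q Cq = Cq"
proof -
  have "(1 - fps_const (q*s) * fps_X^2) * sc q Cq = (1 - fps_const 0 * fps_X^2) * Cq"
    unfolding Cq_def
  proof (rule ev_eq)
    fix k
    have "(Suc k)^2 = k^2 + 2*k + 1" by (simp add: power2_eq_square)
    then have e: "q^((Suc k)^2) = q^(k^2) * q^(2*k) * q" by (simp only: power_add power_one_right)
    show "q^(2*k+2) * ((-1)^Suc k * q^((Suc k)^2) * s^Suc k / qpoch (q^2) (q^2) (Suc k))
       - q*s * (q^(2*k) * ((-1)^k * q^(k^2) * s^k / qpoch (q^2) (q^2) k))
      = (-1)^Suc k * q^((Suc k)^2) * s^Suc k / qpoch (q^2) (q^2) (Suc k) - 0 * ((-1)^k * q^(k^2) * s^k / qpoch (q^2) (q^2) k)"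
      unfolding e pw2 nzq2' using nzq2[of k] nz2'[of k] by (simp add: field_simps)
  qed simp
  then show ?thesis by simp
qed

lemma M_eq: "(1 - fps_const (q*s) * fps_X^2) * sc q Mq = (1 - fps_const 1 * fps_X^2) * Mq"
  unfolding Mq_def
proof (rule ev_eq)
  fix k
  have e: "qpoch (q*s) (q^2) (Suc k) = qpoch (q*s) (q^2) k * (1 - q^(2*k) * q * s)"
    by (simp add: qpoch_Suc pwsq mult.assoc)
  show "q^(2*k+2) * (qpoch (q*s) (q^2) (Suc k) / qpoch (q^2) (q^2) (Suc k))
       - q*s * (q^(2*k) * (qpoch (q*s) (q^2) k / qpoch (q^2) (q^2) k))
      = qpoch (q*s) (q^2) (Suc k) / qpoch (q^2) (q^2) (Suc k) - 1 * (qpoch (q*s) (q^2) k / qpoch (q^2) (q^2) k)"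
    unfolding e pw2 nzq2' using nzq2[of k] nz2'[of k] by (simp add: field_simps)
qed simp

lemma N_eq: "(1 + fps_X) * sc q Nq = (1 - fps_const s * fps_X) * Nq"
  unfolding Nq_def Pl_L
proof (rule lin_eq)
  fix n
  have e: "(\<Prod>i<Suc n. s + q^i) = (\<Prod>i<n. s + q^i) * (s + q^n)" by simp
  show "q^Suc n * ((\<Prod>i<Suc n. s + q^i) / qpoch q q (Suc n)) - (-1) * (q^n * ((\<Prod>i<n. s + q^i) / qpoch q q n))
     = (\<Prod>i<Suc n. s + q^i) / qpoch q q (Suc n) - s * ((\<Prod>i<n. s + q^i) / qpoch q q n)"
    unfolding e qpoch_Suc using nzq[of n] nz1[of n] by (simp add: field_simps)
qed simp

lemma T_eq: "(1 - fps_const s * fps_X) * sc q Tq = (1 + fps_X) * Tq"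
  unfolding Tq_def Pl_L
proof (rule lin_eq)
  fix n
  show "q^Suc n * ((-1)^Suc n * qpoch (-s) q (Suc n) / qpoch q q (Suc n)) - s * (q^n * ((-1)^n * qpoch (-s) q n / qpoch q q n))
     = (-1)^Suc n * qpoch (-s) q (Suc n) / qpoch q q (Suc n) - (-1) * ((-1)^n * qpoch (-s) q n / qpoch q q n)"
    unfolding qpoch_Suc using nzq[of n] nz1[of n] by (simp add: field_simps)
qed simp


lemma rs0: "rogers_szego 0 s' p = (1::'a)" by (simp add: rogers_szego_def qbinom_def)
lemma rs1: "qpoch p p 1 \<noteq> 0 \<Longrightarrow> rogers_szego 1 s' p = 1 + (s'::'a)"
  by (simp add: rogers_szego_def qbinom_def)

lemma F_eq: "(1 - fps_const (q*s) * fps_X^2) * sc q Fq = (1 - fps_const 1 * fps_X) * ((1 - fps_const s * fps_X) * Fq)"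
proof (rule fps_ext)
  fix n
  have F0: "Fq $ 0 = 1" by (simp add: Fq_def rs0)
  have F1: "Fq $ Suc 0 = (1 + s) / (1 - q)"
    using rs1[of "q^2" s] nzq2[of 1] by (simp add: Fq_def qpoch_def)
  show "((1 - fps_const (q*s) * fps_X^2) * sc q Fq) $ n = ((1 - fps_const 1 * fps_X) * ((1 - fps_const s * fps_X) * Fq)) $ n"
  proof (cases n)
    case 0 then show ?thesis by (simp add: S_nth L_nth)
  next
    case (Suc n')
    show ?thesis
    proof (cases n')
      case 0
      have "1 - q \<noteq> 0" using gen[of 1] by auto
      have n1: "n = Suc 0" using Suc 0 by simp
      have "q * ((1 + s) / (1 - q)) = (1 + s) / (1 - q) - s - 1"
        using \<open>1 - q \<noteq> 0\<close> by (simp add: field_simps)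
      then show ?thesis unfolding n1 by (simp only: S_nth L_nth) (simp add: F0 F1)
    next
      case (Suc m)
      have l: "((1 - fps_const (q*s) * fps_X^2) * sc q Fq) $ n = q^Suc (Suc m) * Fq $ Suc (Suc m) - q*s*(q^m * Fq $ m)"
        using \<open>n = Suc n'\<close> Suc by (simp add: S_nth)
      have r: "((1 - fps_const 1 * fps_X) * ((1 - fps_const s * fps_X) * Fq)) $ n
          = Fq $ Suc (Suc m) - s * Fq $ Suc m - (Fq $ Suc m - s * Fq $ m)"
        using \<open>n = Suc n'\<close> Suc by (simp only: L_nth) simp
      have pq: "q^2 * (q^2)^m = (q^m*q)^2" by (simp add: power_mult_distrib power_mult[symmetric] mult.commute)
        show ?thesis unfolding l r
          using F_aux[OF nzq[of m] nz1[of m], of s "rogers_szego (Suc m) s (q^2)" "rogers_szego m s (q^2)"] nz1[of "Suc m"]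
          by (simp add: Fq_def RS_rec[OF gen2] qpoch_Suc pq mult.assoc mult.left_commute)
    qed
  qed
qed


lemma C0: "Cq $ 0 = 1" by (simp add: Cq_def)
lemma D0: "Dq $ 0 = 1" by (simp add: Dq_ev)
lemma M0: "Mq $ 0 = 1" by (simp add: Mq_def)
lemma N0: "Nq $ 0 = 1" by (simp add: Nq_def qpoch_def)
lemma T0: "Tq $ 0 = 1" by (simp add: Tq_def qpoch_def)
lemma A0: "Aq $ 0 = 1" by (simp add: Aq_def qpoch_def)
lemma F0': "Fq $ 0 = 1" by (simp add: Fq_def rs0)

lemma A_eq2: "sc q Aq = (1 - fps_const 1 * fps_X) * ((1 - fps_const s * fps_X) * Aq)"
  unfolding Aq_def by (rule A_eq[OF gen])

lemma CD: "Cq * Dq = 1"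
proof (rule uniq2[where q=q and Q=1 and P=1])
  have "sc q (Cq * Dq) = sc q Cq * ((1 - fps_const (q*s) * fps_X^2) * Dq)"
    by (simp add: sc_mult D_eq)
  also have "\<dots> = ((1 - fps_const (q*s) * fps_X^2) * sc q Cq) * Dq" by (simp add: mult_ac)
  also have "\<dots> = Cq * Dq" by (simp add: C_eq)
  finally show "1 * sc q (Cq * Dq) = 1 * (Cq * Dq)" by simp
qed (simp_all add: C0 D0 gen)

lemma FD: "Fq * Dq = Aq"
proof (rule uniq2[where q=q and Q=1 and P="(1 - fps_const 1 * fps_X) * (1 - fps_const s * fps_X)"])
  have "sc q (Fq * Dq) = sc q Fq * ((1 - fps_const (q*s) * fps_X^2) * Dq)"
    by (simp add: sc_mult D_eq)
  also have "\<dots> = ((1 - fps_const (q*s) * fps_X^2) * sc q Fq) * Dq" by (simp add: mult_ac)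
  also have "\<dots> = (1 - fps_const 1 * fps_X) * (1 - fps_const s * fps_X) * (Fq * Dq)"
    unfolding F_eq by (simp add: mult_ac)
  finally show "1 * sc q (Fq * Dq) = (1 - fps_const 1 * fps_X) * (1 - fps_const s * fps_X) * (Fq * Dq)" by simp
  show "1 * sc q Aq = (1 - fps_const 1 * fps_X) * (1 - fps_const s * fps_X) * Aq"
    unfolding Aq_def using A_eq[OF gen, of s] by (simp add: mult_ac)
qed (simp_all add: F0' D0 A0 gen)

lemma invD: "inverse Dq = Cq"
  by (rule fps_inverse_unique) (simp add: CD mult.commute)

lemma F_AC: "Fq = Aq * Cq"
proof -
  have "Fq = Fq * (Dq * Cq)" by (simp add: CD mult.commute)
  also have "\<dots> = Aq * Cq" by (simp add: FD mult.assoc[symmetric])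
  finally show ?thesis .
qed

lemma TN: "Tq * Nq = 1"
proof (rule uniq2[where q=q and Q="(1 - fps_const s * fps_X) * (1 + fps_X)" and P="(1 - fps_const s * fps_X) * (1 + fps_X)"])
  have "(1 - fps_const s * fps_X) * (1 + fps_X) * sc q (Tq * Nq)
      = ((1 - fps_const s * fps_X) * sc q Tq) * ((1 + fps_X) * sc q Nq)"
    by (simp add: sc_mult mult_ac)
  also have "\<dots> = (1 - fps_const s * fps_X) * (1 + fps_X) * (Tq * Nq)"
    unfolding T_eq N_eq by (simp add: mult_ac)
  finally show "(1 - fps_const s * fps_X) * (1 + fps_X) * sc q (Tq * Nq) = (1 - fps_const s * fps_X) * (1 + fps_X) * (Tq * Nq)" .
qed (simp_all add: T0 N0 gen)

lemma S1: "(1 - fps_const 1 * fps_X^2 :: 'a fps) = (1 - fps_const 1 * fps_X) * (1 + fps_X)"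
  by (simp add: algebra_simps power2_eq_square)

lemma MND: "Mq * Nq * Dq = Aq"
proof (rule uniq2[where q=q and Q="(1 + fps_X) * (1 - fps_const (q*s) * fps_X^2)"
     and P="(1 + fps_X) * (1 - fps_const (q*s) * fps_X^2) * ((1 - fps_const 1 * fps_X) * (1 - fps_const s * fps_X))"])
  have "(1 + fps_X) * (1 - fps_const (q*s) * fps_X^2) * sc q (Mq * Nq * Dq)
      = ((1 - fps_const (q*s) * fps_X^2) * sc q Mq) * ((1 + fps_X) * sc q Nq) * sc q Dq"
    by (simp add: sc_mult mult_ac)
  also have "\<dots> = ((1 - fps_const 1 * fps_X) * (1 + fps_X) * Mq) * ((1 - fps_const s * fps_X) * Nq) * ((1 - fps_const (q*s) * fps_X^2) * Dq)"
    unfolding M_eq N_eq D_eq S1 by simp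
  also have "\<dots> = (1 + fps_X) * (1 - fps_const (q*s) * fps_X^2) * ((1 - fps_const 1 * fps_X) * (1 - fps_const s * fps_X)) * (Mq * Nq * Dq)"
    by (simp add: mult_ac)
  finally show "(1 + fps_X) * (1 - fps_const (q*s) * fps_X^2) * sc q (Mq * Nq * Dq)
     = (1 + fps_X) * (1 - fps_const (q*s) * fps_X^2) * ((1 - fps_const 1 * fps_X) * (1 - fps_const s * fps_X)) * (Mq * Nq * Dq)" .
  show "(1 + fps_X) * (1 - fps_const (q*s) * fps_X^2) * sc q Aq
     = (1 + fps_X) * (1 - fps_const (q*s) * fps_X^2) * ((1 - fps_const 1 * fps_X) * (1 - fps_const s * fps_X)) * Aq"
    by (simp only: A_eq2) (simp add: mult_ac)
qed (simp_all add: M0 N0 D0 A0 gen)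

lemma F_MN: "Fq = Mq * Nq"
proof -
  have "Mq * Nq = Mq * Nq * (Dq * Cq)" by (simp add: CD mult.commute)
  also have "\<dots> = Aq * Cq" by (simp add: MND mult.assoc[symmetric])
  finally show ?thesis by (simp add: F_AC)
qed

lemma TF: "Tq * Fq = Mq"
proof -
  have "Tq * Fq = Mq * (Tq * Nq)" by (simp add: F_MN mult_ac)
  then show ?thesis by (simp add: TN)
qed


lemma qq2: "qpoch q q (2*j) = qpoch q (q^2) j * qpoch (q^2) (q^2) j"
proof (induction j)
  case 0 then show ?case by simp
next
  case (Suc j)
  have two: "2 * Suc j = Suc (Suc (2*j))" by simp
  show ?case using Suc by (simp only: two qpoch_Suc) (simp add: power_mult power2_eq_square power_mult_distrib mult_ac)
qed

lemma nzq_odd: "qpoch q (q^2) j \<noteq> 0" using nzq[of "2*j"] qq2[of j] by simp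

lemma part1: "rogers_szego n s (q^2) = (\<Sum>j=0..n div 2. (-1)^j * q^(j^2) * qpoch q (q^2) j * qbinom q n (2*j)
                              * s^j * rogers_szego (n - 2*j) s q)"
proof -
  have Ak: "Aq $ k = rogers_szego k s q / qpoch q q k" for k by (simp add: Aq_def B_coeff[OF gen])
  have "Fq $ n = (Cq * Aq) $ n" by (simp add: F_AC mult.commute)
  also have "\<dots> = (\<Sum>i=0..n. Cq $ i * Aq $ (n-i))" by (rule fps_mult_nth)
  also have "\<dots> = (\<Sum>j=0..n div 2. Cq $ (2*j) * Aq $ (n-2*j))" by (rule even_sum) (auto simp: Cq_def ev_def)
  finally have e: "rogers_szego n s (q^2) = qpoch q q n * (\<Sum>j=0..n div 2. Cq $ (2*j) * Aq $ (n-2*j))"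
    using nzq[of n] by (simp add: Fq_def field_simps)
  show ?thesis unfolding e sum_distrib_left
  proof (rule sum.cong)
    fix j assume "j \<in> {0..n div 2}"
    then have j: "2*j \<le> n" by auto
    show "qpoch q q n * (Cq $ (2*j) * Aq $ (n-2*j)) = (-1)^j * q^(j^2) * qpoch q (q^2) j * qbinom q n (2*j)
                              * s^j * rogers_szego (n - 2*j) s q"
      using j nzq[of n] nzq[of "n-2*j"] nzq2[of j] nzq_odd[of j]
      by (simp only: Ak Cq_def ev_even qbinom_def if_P[OF j] qq2) (simp add: field_simps)
  qed simp
qed

lemma prodlem: "s \<noteq> 0 \<Longrightarrow> s^m * qpoch (-1/s) q m = (\<Prod>i<m. s + q^i)"
proof (induction m)
  case 0 then show ?case by simp
next
  case (Suc m)
  have "s^Suc m * qpoch (-1/s) q (Suc m) = (s^m * qpoch (-1/s) q m) * (s * (1 - q^m * (-1/s)))"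
    by (simp only: qpoch_Suc power_Suc mult_ac)
  also have "s * (1 - q^m * (-1/s)) = s + q^m" using Suc.prems by (simp add: field_simps)
  finally have A: "s^Suc m * qpoch (-1/s) q (Suc m) = (s^m * qpoch (-1/s) q m) * (s + q^m)" .
  show ?case unfolding A Suc.IH[OF Suc.prems] by simp
qed

lemma part2: "s \<noteq> 0 \<Longrightarrow> rogers_szego n s (q^2) =
           (\<Sum>j=0..n div 2. qbinom q n (2*j) * qpoch q (q^2) j * qpoch (q * s) (q^2) j
                              * s ^ (n - 2*j) * qpoch (- 1 / s) q (n - 2*j))"
proof -
  assume s0: "s \<noteq> 0"
  have "Fq $ n = (Mq * Nq) $ n" by (simp add: F_MN)
  also have "\<dots> = (\<Sum>i=0..n. Mq $ i * Nq $ (n-i))" by (rule fps_mult_nth)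
  also have "\<dots> = (\<Sum>j=0..n div 2. Mq $ (2*j) * Nq $ (n-2*j))" by (rule even_sum) (auto simp: Mq_def ev_def)
  finally have e: "rogers_szego n s (q^2) = qpoch q q n * (\<Sum>j=0..n div 2. Mq $ (2*j) * Nq $ (n-2*j))"
    using nzq[of n] by (simp add: Fq_def field_simps)
  show ?thesis unfolding e sum_distrib_left
  proof (rule sum.cong)
    fix j assume "j \<in> {0..n div 2}"
    then have j: "2*j \<le> n" by auto
    have pl: "s ^ (n - 2*j) * qpoch (- 1 / s) q (n - 2*j) = (\<Prod>i<n-2*j. s + q^i)"
      using prodlem[OF s0] by simp
    show "qpoch q q n * (Mq $ (2*j) * Nq $ (n-2*j)) = qbinom q n (2*j) * qpoch q (q^2) j * qpoch (q * s) (q^2) j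
                              * s ^ (n - 2*j) * qpoch (- 1 / s) q (n - 2*j)"
      using j nzq[of n] nzq[of "n-2*j"] nzq2[of j] nzq_odd[of j]
      by (simp only: mult.assoc pl Mq_def Nq_def ev_even qbinom_def if_P[OF j] qq2 fps_nth_Abs_fps) (simp add: field_simps)
  qed simp
qed

lemma part3: "(\<Sum>k=0..N. (-1) ^ k * qpoch (- s) q k * qbinom q N k * rogers_szego (N - k) s (q^2))
   = qpoch q q N * Mq $ N"
proof -
  have "Mq $ N = (\<Sum>k=0..N. Tq $ k * Fq $ (N-k))" by (simp add: TF[symmetric] fps_mult_nth)
  then have "qpoch q q N * Mq $ N = (\<Sum>k=0..N. qpoch q q N * (Tq $ k * Fq $ (N-k)))"
    by (simp add: sum_distrib_left)
  also have "\<dots> = (\<Sum>k=0..N. (-1) ^ k * qpoch (- s) q k * qbinom q N k * rogers_szego (N - k) s (q^2))"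
  proof (rule sum.cong)
    fix k assume "k \<in> {0..N}"
    then have k: "k \<le> N" by auto
    show "qpoch q q N * (Tq $ k * Fq $ (N-k)) = (-1) ^ k * qpoch (- s) q k * qbinom q N k * rogers_szego (N - k) s (q^2)"
      using k nzq[of N] nzq[of "N-k"] nzq[of k]
      by (simp add: Tq_def Fq_def qbinom_def field_simps)
  qed simp
  finally show ?thesis by simp
qed

lemma part3a: "(\<Sum>k=0..2*n. (-1) ^ k * qpoch (- s) q k * qbinom q (2*n) k
                              * rogers_szego (2*n - k) s (q^2))
           = qpoch q (q^2) n * qpoch (q * s) (q^2) n"
  unfolding part3 using nzq2[of n] by (simp add: Mq_def qq2)

lemma part3b: "(\<Sum>k=0..2*n+1. (-1) ^ k * qpoch (- s) q k * qbinom q (2*n+1) k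
                              * rogers_szego (2*n + 1 - k) s (q^2)) = 0"
  unfolding part3 by (simp add: Mq_def)

lemma part0: "Abs_fps (\<lambda>n. rogers_szego n s (q^2) / qpoch q q n)
           = fps_compose (qexp q) (fps_const s * fps_X) * qexp q
             * inverse (fps_compose (qexp (q^2)) (fps_const (q * s) * fps_X ^ 2))"
  using F_AC unfolding Fq_def Aq_def compose_lin Dq_def[symmetric] invD .

end

theorem lemma1p3:
  fixes q s :: "'a::field"
  assumes q_generic: "\<And>n. n > 0 \<Longrightarrow> q ^ n \<noteq> 1"
  shows "Abs_fps (\<lambda>n. rogers_szego n s (q^2) / qpoch q q n)
           = fps_compose (qexp q) (fps_const s * fps_X) * qexp q
             * inverse (fps_compose (qexp (q^2)) (fps_const (q * s) * fps_X ^ 2))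
     \<and> (\<forall>n::nat. rogers_szego n s (q^2) =
           (\<Sum>j=0..n div 2. (-1) ^ j * q ^ (j^2) * qpoch q (q^2) j * qbinom q n (2*j)
                              * s ^ j * rogers_szego (n - 2*j) s q))
     \<and> (\<forall>n::nat. s \<noteq> 0 \<longrightarrow> rogers_szego n s (q^2) =
           (\<Sum>j=0..n div 2. qbinom q n (2*j) * qpoch q (q^2) j * qpoch (q * s) (q^2) j
                              * s ^ (n - 2*j) * qpoch (- 1 / s) q (n - 2*j)))
     \<and> (\<forall>n::nat. (\<Sum>k=0..2*n. (-1) ^ k * qpoch (- s) q k * qbinom q (2*n) k
                              * rogers_szego (2*n - k) s (q^2))
           = qpoch q (q^2) n * qpoch (q * s) (q^2) n)
     \<and> (\<forall>n::nat. (\<Sum>k=0..2*n+1. (-1) ^ k * qpoch (- s) q k * qbinom q (2*n+1) k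
                              * rogers_szego (2*n + 1 - k) s (q^2)) = 0)"
  using part0[OF q_generic] part1[OF q_generic] part2[OF q_generic] part3a[OF q_generic] part3b[OF q_generic]
  by blast

end
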